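(* Let $F\in[0,1]$ and $0\le p\le F$, and let $F'_{\max}(p,F)=\max\{F'_{00}(\rho_1\otimes\rho_2):\rho_1,\rho_2\in S_{p,F}\}$. Then $$F'_{\max}(p,F)=1-2p(1-F).$$ Moreover (for $p<1$), with $\tilde F=(F-p)/(1-p)$, $|\psi\rangle=\sqrt{\tilde F}|\Psi_{00}\rangle+\sqrt{1-\tilde F}|\Psi_{11}\rangle$ and $\rho_{\mathrm{opt}}=p|\Psi_{00}\rangle\langle\Psi_{00}|+(1-p)|\psi\rangle\langle\psi|$, one has $\rho_{\mathrm{opt}}\in S_{p,F}$ and $F'_{00}(\rho_{\mathrm{opt}}\otimes\rho_{\mathrm{opt}})=F'_{\max}(p,F)$.
   Context: For a pair of qubit registers $(R,T)$, $|\Psi_{ij}\rangle_{RT}=(I_R\otimes (X^iZ^j)_T)\tfrac1{\sqrt2}(|00\rangle+|11\rangle)_{RT}$, $i,j\in\{0,1\}$ ($X,Z$ Pauli matrices). $S_{p,F}$ is the set of two-qubit density operators $\rho$ such that $\rho=p|\Psi_{00}\rangle\langle\Psi_{00}|+(1-p)\sigma$ for some density operator $\sigma$ and $\langle\Psi_{00}|\rho|\Psi_{00}\rangle=F$. Postselected swap: $\rho_1$ acts on registers $(A_1,B_1)$ and $\rho_2$ on $(A_2,B_2)$ (Bell states of each $\rho_k$, including $|\psi\rangle$ above, are taken in the ordering $(A_k,B_k)$); a Bell-state measurement on $(A_1,A_2)$ gives outcome $ij$ with probability $p'_{ij}(\rho_1\otimes\rho_2)=\mathrm{Tr}[|\Psi_{ij}\rangle\langle\Psi_{ij}|_{A_1A_2}\rho_1\otimes\rho_2]$,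 and the postselected end-to-end fidelity (after the Pauli correction $Z^jX^i$ on $B_2$) is $F'_{ij}(\rho_1\otimes\rho_2)=\frac{1}{p'_{ij}}\mathrm{Tr}[|\Psi_{ij}\rangle\langle\Psi_{ij}|_{B_1B_2}|\Psi_{ij}\rangle\langle\Psi_{ij}|_{A_1A_2}\rho_1\otimes\rho_2]$. *)

theory Defs
  imports Complex_Main
begin

(* A qubit register has basis indexed by bool (False = |0>, True = |1>).
   A pair of registers (R,T) has basis indexed by bool \<times> bool, first component = R. *)

type_synonym qvec = "bool \<times> bool \<Rightarrow> complex"
type_synonym qop = "bool \<times> bool \<Rightarrow> bool \<times> bool \<Rightarrow> complex"

definition pauli_X :: "bool \<Rightarrow> bool \<Rightarrow> complex" where
  "pauli_X a b = (if a \<noteq> b then 1 else 0)"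

definition pauli_Z :: "bool \<Rightarrow> bool \<Rightarrow> complex" where
  "pauli_Z a b = (if a = b then (if a then -1 else 1) else 0)"

definition id2 :: "bool \<Rightarrow> bool \<Rightarrow> complex" where
  "id2 a b = (if a = b then 1 else 0)"

definition mmult2 :: "(bool \<Rightarrow> bool \<Rightarrow> complex) \<Rightarrow> (bool \<Rightarrow> bool \<Rightarrow> complex) \<Rightarrow> bool \<Rightarrow> bool \<Rightarrow> complex" where
  "mmult2 A B a c = (\<Sum>b\<in>UNIV. A a b * B b c)"

definition XZpow :: "nat \<Rightarrow> nat \<Rightarrow> bool \<Rightarrow> bool \<Rightarrow> complex" where
  "XZpow i j = mmult2 (if i = 1 then pauli_X else id2) (if j = 1 then pauli_Z else id2)"

definition phi_plus :: qvec where
  "phi_plus = (\<lambda>(r, t). if r = t then complex_of_real (1 / sqrt 2) else 0)"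

definition bell :: "nat \<Rightarrow> nat \<Rightarrow> qvec" where
  "bell i j = (\<lambda>(r, t). \<Sum>t'\<in>UNIV. XZpow i j t t' * phi_plus (r, t'))"

definition proj :: "qvec \<Rightarrow> qop" where
  "proj v x y = v x * cnj (v y)"

definition expval :: "qop \<Rightarrow> qvec \<Rightarrow> complex" where
  "expval A v = (\<Sum>x\<in>UNIV. \<Sum>y\<in>UNIV. cnj (v x) * A x y * v y)"

definition trace_op :: "qop \<Rightarrow> complex" where
  "trace_op A = (\<Sum>x\<in>UNIV. A x x)"

definition psd :: "qop \<Rightarrow> bool" where
  "psd A \<longleftrightarrow> (\<forall>v. Im (expval A v) = 0 \<and> Re (expval A v) \<ge> 0)"

definition density_op :: "qop \<Rightarrow> bool" where
  "density_op A \<longleftrightarrow> psd A \<and> trace_op A = 1"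

definition S_set :: "real \<Rightarrow> real \<Rightarrow> qop set" where
  "S_set p F = {\<rho>. density_op \<rho> \<and>
      (\<exists>\<sigma>. density_op \<sigma> \<and>
            \<rho> = (\<lambda>x y. complex_of_real p * proj (bell 0 0) x y + complex_of_real (1 - p) * \<sigma> x y)) \<and>
      expval \<rho> (bell 0 0) = complex_of_real F}"

(* rho1 acts on (A1,B1) indexed (a1,b1), rho2 on (A2,B2) indexed (a2,b2).
   p'_ij = Tr[ |Psi_ij><Psi_ij|_{A1A2} (rho1 \<otimes> rho2) ]  (identity on B1,B2) *)
definition swap_prob :: "nat \<Rightarrow> nat \<Rightarrow> qop \<Rightarrow> qop \<Rightarrow> complex" where
  "swap_prob i j \<rho>1 \<rho>2 =
     (\<Sum>a1\<in>UNIV. \<Sum>a2\<in>UNIV. \<Sum>a1'\<in>UNIV. \<Sum>a2'\<in>UNIV. \<Sum>b1\<in>UNIV. \<Sum>b2\<in>UNIV.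
        proj (bell i j) (a1, a2) (a1', a2') * \<rho>1 (a1', b1) (a1, b1) * \<rho>2 (a2', b2) (a2, b2))"

(* Tr[ |Psi_ij><Psi_ij|_{B1B2} |Psi_ij><Psi_ij|_{A1A2} (rho1 \<otimes> rho2) ] *)
definition swap_num :: "nat \<Rightarrow> nat \<Rightarrow> qop \<Rightarrow> qop \<Rightarrow> complex" where
  "swap_num i j \<rho>1 \<rho>2 =
     (\<Sum>a1\<in>UNIV. \<Sum>a2\<in>UNIV. \<Sum>a1'\<in>UNIV. \<Sum>a2'\<in>UNIV.
      \<Sum>b1\<in>UNIV. \<Sum>b2\<in>UNIV. \<Sum>b1'\<in>UNIV. \<Sum>b2'\<in>UNIV.
        proj (bell i j) (a1, a2) (a1', a2') * proj (bell i j) (b1, b2) (b1', b2') *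
        \<rho>1 (a1', b1') (a1, b1) * \<rho>2 (a2', b2') (a2, b2))"

definition swap_fid :: "nat \<Rightarrow> nat \<Rightarrow> qop \<Rightarrow> qop \<Rightarrow> complex" where
  "swap_fid i j \<rho>1 \<rho>2 = swap_num i j \<rho>1 \<rho>2 / swap_prob i j \<rho>1 \<rho>2"

end

theory Submission
  imports Defs "HOL-Analysis.L2_Norm"
begin


definition qf :: "('a::finite \<Rightarrow> 'a \<Rightarrow> complex) \<Rightarrow> ('a \<Rightarrow> complex) \<Rightarrow> complex" where
  "qf A v = (\<Sum>x\<in>UNIV. \<Sum>y\<in>UNIV. cnj (v x) * A x y * v y)"

definition gpsd :: "('a::finite \<Rightarrow> 'a \<Rightarrow> complex) \<Rightarrow> bool" where
  "gpsd A \<longleftrightarrow> (\<forall>v. Im (qf A v) = 0 \<and> Re (qf A v) \<ge> 0)"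

lemma psd_gpsd: "psd A = gpsd A"
  unfolding psd_def gpsd_def expval_def qf_def by simp

lemma sum_two:
  fixes g :: "'a::finite \<Rightarrow> complex"
  assumes "x \<noteq> y"
  shows "(\<Sum>z\<in>UNIV. (if z = x then \<alpha> else if z = y then \<beta> else 0) * g z) = \<alpha> * g x + \<beta> * g y"
proof -
  have "(\<Sum>z\<in>UNIV. (if z = x then \<alpha> else if z = y then \<beta> else 0) * g z)
      = (\<Sum>z\<in>UNIV. (if z = x then \<alpha> * g x else 0) + (if z = y then \<beta> * g y else 0))"
    by (rule sum.cong) (use assms in auto)
  also have "\<dots> = \<alpha> * g x + \<beta> * g y" by (simp add: sum.distrib)
  finally show ?thesis .
qed

lemma sum_two':
  fixes g :: "'a::finite \<Rightarrow> complex"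
  assumes "x \<noteq> y"
  shows "(\<Sum>z\<in>UNIV. cnj (if z = x then \<alpha> else if z = y then \<beta> else 0) * g z) = cnj \<alpha> * g x + cnj \<beta> * g y"
proof -
  have "(\<Sum>z\<in>UNIV. cnj (if z = x then \<alpha> else if z = y then \<beta> else 0) * g z)
      = (\<Sum>z\<in>UNIV. (if z = x then cnj \<alpha> * g x else 0) + (if z = y then cnj \<beta> * g y else 0))"
    by (rule sum.cong) (use assms in auto)
  also have "\<dots> = cnj \<alpha> * g x + cnj \<beta> * g y" by (simp add: sum.distrib)
  finally show ?thesis .
qed

lemma qf_two:
  assumes "x \<noteq> y"
  shows "qf A (\<lambda>z. if z = x then \<alpha> else if z = y then \<beta> else 0)
     = cnj \<alpha> * A x x * \<alpha> + cnj \<alpha> * A x y * \<beta> + cnj \<beta> * A y x * \<alpha> + cnj \<beta> * A y y * \<beta>"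
proof -
  have "qf A (\<lambda>z. if z = x then \<alpha> else if z = y then \<beta> else 0)
     = (\<Sum>z\<in>UNIV. cnj (if z = x then \<alpha> else if z = y then \<beta> else 0) *
          (\<Sum>w\<in>UNIV. A z w * (if w = x then \<alpha> else if w = y then \<beta> else 0)))"
    unfolding qf_def by (simp add: sum_distrib_left mult.assoc)
  also have "\<dots> = cnj \<alpha> * (\<Sum>w\<in>UNIV. A x w * (if w = x then \<alpha> else if w = y then \<beta> else 0))
      + cnj \<beta> * (\<Sum>w\<in>UNIV. A y w * (if w = x then \<alpha> else if w = y then \<beta> else 0))"
    by (rule sum_two'[OF assms])
  also have "(\<Sum>w\<in>UNIV. A x w * (if w = x then \<alpha> else if w = y then \<beta> else 0)) = \<alpha> * A x x + \<beta> * A x y"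
    using sum_two[OF assms, of \<alpha> \<beta> "A x"] by (simp add: mult.commute)
  also have "(\<Sum>w\<in>UNIV. A y w * (if w = x then \<alpha> else if w = y then \<beta> else 0)) = \<alpha> * A y x + \<beta> * A y y"
    using sum_two[OF assms, of \<alpha> \<beta> "A y"] by (simp add: mult.commute)
  finally show ?thesis by (simp add: algebra_simps)
qed

lemma sum_one: "(\<Sum>z\<in>(UNIV::'a::finite set). f z * (if z = x then \<alpha> else 0)) = f x * (\<alpha>::complex)"
proof -
  have "(\<Sum>z\<in>UNIV. f z * (if z = x then \<alpha> else 0)) = (\<Sum>z\<in>UNIV. if z = x then f x * \<alpha> else 0)"
    by (rule sum.cong) auto
  also have "\<dots> = f x * \<alpha>" by simp
  finally show ?thesis .
qed

lemma sum_one': "(\<Sum>z\<in>(UNIV::'a::finite set). cnj (if z = x then \<alpha> else 0) * f z) = cnj \<alpha> * (f x::complex)"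
proof -
  have "(\<Sum>z\<in>UNIV. cnj (if z = x then \<alpha> else 0) * f z) = (\<Sum>z\<in>UNIV. if z = x then cnj \<alpha> * f x else 0)"
    by (rule sum.cong) auto
  also have "\<dots> = cnj \<alpha> * f x" by simp
  finally show ?thesis .
qed

lemma qf_one: "qf A (\<lambda>z. if z = x then \<alpha> else 0) = cnj \<alpha> * A x x * \<alpha>"
proof -
  have "qf A (\<lambda>z. if z = x then \<alpha> else 0) = (\<Sum>z\<in>UNIV. cnj (if z = x then \<alpha> else 0) *
          (\<Sum>w\<in>UNIV. A z w * (if w = x then \<alpha> else 0)))"
    unfolding qf_def by (simp add: sum_distrib_left mult.assoc)
  also have "\<dots> = cnj \<alpha> * (A x x * \<alpha>)" by (simp only: sum_one sum_one')
  finally show ?thesis by (simp add: mult.assoc)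
qed

lemma gpsd_diag: "gpsd A \<Longrightarrow> Im (A x x) = 0 \<and> Re (A x x) \<ge> 0"
  using qf_one[of A x 1] unfolding gpsd_def by (metis complex_cnj_one mult_1 mult.right_neutral)

lemma gpsd_herm:
  assumes "gpsd A" shows "A x y = cnj (A y x)"
proof (cases "x = y")
  case True then show ?thesis using gpsd_diag[OF assms, of x] by (simp add: complex_eq_iff)
next
  case False
  have d1: "Im (A x x) = 0" "Im (A y y) = 0" using gpsd_diag[OF assms] by auto
  have "Im (qf A (\<lambda>z. if z = x then 1 else if z = y then 1 else 0)) = 0" using assms gpsd_def by blast
  then have h1: "Im (A x y + A y x) = 0" using qf_two[OF False, of A 1 1] d1 by simp
  have "Im (qf A (\<lambda>z. if z = x then 1 else if z = y then \<i> else 0)) = 0" using assms gpsd_def by blast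
  then have h2: "Re (A x y - A y x) = 0" using qf_two[OF False, of A 1 \<i>] d1 by simp
  show ?thesis using h1 h2 by (simp add: complex_eq_iff)
qed

lemma qf_add: "qf A (\<lambda>z. v z + w z) = qf A v + qf A w
   + (\<Sum>x\<in>UNIV. \<Sum>y\<in>UNIV. cnj (v x) * A x y * w y) + (\<Sum>x\<in>UNIV. \<Sum>y\<in>UNIV. cnj (w x) * A x y * v y)"
  unfolding qf_def by (simp add: algebra_simps sum.distrib)

lemma qf_add_delta: "qf A (\<lambda>z. v z + (if z = a then l else 0)) = qf A v + cnj l * A a a * l
   + (\<Sum>x\<in>UNIV. cnj (v x) * A x a) * l + cnj l * (\<Sum>y\<in>UNIV. A a y * v y)"
proof -
  have 1: "(\<Sum>x\<in>UNIV. \<Sum>y\<in>UNIV. cnj (v x) * A x y * (if y = a then l else 0)) = (\<Sum>x\<in>UNIV. cnj (v x) * A x a) * l"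
  proof -
    have "\<And>x. (\<Sum>y\<in>UNIV. cnj (v x) * A x y * (if y = a then l else 0)) = cnj (v x) * A x a * l"
      using sum_one[of "\<lambda>y. cnj (v _) * A _ y"] by blast
    then show ?thesis by (simp add: sum_distrib_right)
  qed
  have 2: "(\<Sum>x\<in>UNIV. \<Sum>y\<in>UNIV. cnj (if x = a then l else 0) * A x y * v y) = cnj l * (\<Sum>y\<in>UNIV. A a y * v y)"
  proof -
    have "(\<Sum>x\<in>UNIV. \<Sum>y\<in>UNIV. cnj (if x = a then l else 0) * A x y * v y)
       = (\<Sum>x\<in>UNIV. cnj (if x = a then l else 0) * (\<Sum>y\<in>UNIV. A x y * v y))"
      by (simp add: sum_distrib_left mult.assoc)
    also have "\<dots> = cnj l * (\<Sum>y\<in>UNIV. A a y * v y)" by (rule sum_one')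
    finally show ?thesis .
  qed
  show ?thesis unfolding qf_add 1 2 qf_one by simp
qed

lemma gpsd_row_zero:
  assumes "gpsd A" "A a a = 0"
  shows "A a y = 0"
proof (rule ccontr)
  assume u0: "A a y \<noteq> 0"
  define u where "u = A a y"
  have ya: "y \<noteq> a" using u0 assms(2) by auto
  define t where "t = (Re (A y y) + 1) / (cmod u)^2"
  have tpos: "t * (cmod u)^2 = Re (A y y) + 1"
    unfolding t_def using u0 u_def by simp
  define \<alpha> where "\<alpha> = - u * of_real t"
  have "qf A (\<lambda>z. if z = a then \<alpha> else if z = y then 1 else 0)
     = cnj \<alpha> * A a a * \<alpha> + cnj \<alpha> * A a y * 1 + cnj 1 * A y a * \<alpha> + cnj 1 * A y y * 1"
    by (rule qf_two[OF ya[symmetric]])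
  also have "\<dots> = cnj \<alpha> * u + cnj u * \<alpha> + A y y"
    using assms(2) gpsd_herm[OF assms(1), of y a] u_def by simp
  also have "\<dots> = - of_real (2 * (t * (cmod u)^2)) + A y y"
    unfolding \<alpha>_def using complex_norm_square[of u] by (simp add: algebra_simps)
  finally have "Re (qf A (\<lambda>z. if z = a then \<alpha> else if z = y then 1 else 0)) = - Re (A y y) - 2"
    using tpos by simp
  moreover have "Re (A y y) \<ge> 0" using gpsd_diag[OF assms(1)] by blast
  moreover have "Re (qf A (\<lambda>z. if z = a then \<alpha> else if z = y then 1 else 0)) \<ge> 0"
    using assms(1) gpsd_def by blast
  ultimately show False by linarith
qed

lemma factor_ind:
  fixes S :: "'a::finite set"
  assumes "finite S"
  shows "\<forall>A::'a \<Rightarrow> 'a \<Rightarrow> complex. gpsd A \<and> (\<forall>x y. x \<notin> S \<or> y \<notin> S \<longrightarrow> A x y = 0) \<longrightarrow>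
     (\<exists>(n::nat) f. \<forall>x y. A x y = (\<Sum>j<n. f j x * cnj (f j y)))"
  using assms
proof (induction S rule: finite_induct)
  case empty
  show ?case
  proof (intro allI impI)
    fix A :: "'a \<Rightarrow> 'a \<Rightarrow> complex"
    assume "gpsd A \<and> (\<forall>x y. x \<notin> {} \<or> y \<notin> {} \<longrightarrow> A x y = 0)"
    then have z: "\<forall>x y. A x y = 0" by simp
    show "\<exists>(n::nat) f. \<forall>x y. A x y = (\<Sum>j<n. f j x * cnj (f j y))"
    proof -
      define f0 :: "nat \<Rightarrow> 'a \<Rightarrow> complex" where "f0 = (\<lambda>j x. 0)"
      have "\<forall>x y. A x y = (\<Sum>j<(0::nat). f0 j x * cnj (f0 j y))"
        using z by simp
      then show ?thesis by blast
    qed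
  qed
next
  case (insert a S)
  show ?case
  proof (intro allI impI)
    fix A :: "'a \<Rightarrow> 'a \<Rightarrow> complex"
    assume asm: "gpsd A \<and> (\<forall>x y. x \<notin> insert a S \<or> y \<notin> insert a S \<longrightarrow> A x y = 0)"
    then have psdA: "gpsd A" and supp: "\<And>x y. x \<notin> insert a S \<or> y \<notin> insert a S \<Longrightarrow> A x y = 0" by auto
    define d where "d = Re (A a a)"
    have Aaa: "A a a = of_real d" using gpsd_diag[OF psdA, of a] unfolding d_def by (simp add: complex_eq_iff)
    have d0: "d \<ge> 0" using gpsd_diag[OF psdA, of a] unfolding d_def by simp
    show "\<exists>(n::nat) f. \<forall>x y. A x y = (\<Sum>j<n. f j x * cnj (f j y))"
    proof (cases "d = 0")
      case True
      have row: "A a y = 0" for y using gpsd_row_zero[OF psdA] Aaa True by simp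
      have col: "A x a = 0" for x using row[of x] gpsd_herm[OF psdA, of x a] by simp
      have "\<forall>x y. x \<notin> S \<or> y \<notin> S \<longrightarrow> A x y = 0"
        using supp row col by (metis insertE)
      then show ?thesis using insert.IH psdA by blast
    next
      case False
      then have dpos: "d > 0" using d0 by simp
      define B where "B = (\<lambda>x y. A x y - A x a * A a y / A a a)"
      have psdB: "gpsd B" unfolding gpsd_def
      proof
        fix v
        define u where "u = (\<Sum>y\<in>UNIV. A a y * v y)"
        define l where "l = - u / A a a"
        have cu: "(\<Sum>x\<in>UNIV. cnj (v x) * A x a) = cnj u"
          unfolding u_def by (simp add: gpsd_herm[OF psdA, of _ a] mult.commute)
        have "qf B v = qf A v - (\<Sum>x\<in>UNIV. \<Sum>y\<in>UNIV. cnj (v x) * (A x a * A a y / A a a) * v y)"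
          unfolding qf_def B_def by (simp add: algebra_simps sum_subtractf)
        also have "(\<Sum>x\<in>UNIV. \<Sum>y\<in>UNIV. cnj (v x) * (A x a * A a y / A a a) * v y)
             = (\<Sum>x\<in>UNIV. cnj (v x) * A x a) * u / A a a"
          unfolding u_def by (simp add: sum_distrib_left sum_distrib_right sum_divide_distrib algebra_simps)
        finally have qB: "qf B v = qf A v - cnj u * u / A a a" unfolding cu .
        have "qf A (\<lambda>z. v z + (if z = a then l else 0)) = qf A v + cnj l * A a a * l + cnj u * l + cnj l * u"
          using qf_add_delta[of A v a l] cu u_def by simp
        also have "\<dots> = qf B v"
          unfolding qB l_def Aaa using dpos by (simp add: field_simps)
        finally show "Im (qf B v) = 0 \<and> 0 \<le> Re (qf B v)" using psdA gpsd_def by metis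
      qed
      have suppB: "\<forall>x y. x \<notin> S \<or> y \<notin> S \<longrightarrow> B x y = 0"
      proof (intro allI impI)
        fix x y assume "x \<notin> S \<or> y \<notin> S"
        then consider "x = a" | "y = a" | "x \<notin> insert a S" | "y \<notin> insert a S" by blast
        then show "B x y = 0"
        proof cases
          case 1 then show ?thesis unfolding B_def using dpos Aaa by simp
        next
          case 2 then show ?thesis unfolding B_def using dpos Aaa by simp
        next
          case 3 then show ?thesis unfolding B_def using supp[of x y] supp[of x a] by simp
        next
          case 4 then show ?thesis unfolding B_def using supp[of x y] supp[of a y] by simp
        qed
      qed
      obtain n :: nat and f where nf: "\<And>x y. B x y = (\<Sum>j<n. f j x * cnj (f j y))"
        using insert.IH psdB suppB by blast
      define c where "c = (\<lambda>x. A x a / of_real (sqrt d))"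
      define g where "g = (\<lambda>j. if j = n then c else f j)"
      have "A x y = (\<Sum>j<Suc n. g j x * cnj (g j y))" for x y
      proof -
        have "c x * cnj (c y) = A x a * A a y / A a a"
        proof -
          have "(complex_of_real (sqrt d))\<^sup>2 = complex_of_real d"
            using dpos by (simp flip: of_real_power)
          then show ?thesis
            unfolding c_def Aaa using dpos gpsd_herm[OF psdA, of a y]
            by (simp add: field_simps power2_eq_square[symmetric])
        qed
        moreover have "(\<Sum>j<n. g j x * cnj (g j y)) = B x y" unfolding nf g_def by simp
        ultimately show ?thesis unfolding B_def g_def using dpos Aaa by simp
      qed
      then show ?thesis by blast
    qed
  qed
qed

lemma factor:
  fixes A :: "'a::finite \<Rightarrow> 'a \<Rightarrow> complex"
  assumes "gpsd A"
  shows "\<exists>(n::nat) f. \<forall>x y. A x y = (\<Sum>j<n. f j x * cnj (f j y))"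
  using factor_ind[of "UNIV :: 'a set"] assms by auto



lemma bell00: "bell 0 0 = (\<lambda>(r,t). if r = t then complex_of_real (1/sqrt 2) else 0)"
  by (auto simp: fun_eq_iff bell_def XZpow_def mmult2_def id2_def phi_plus_def UNIV_bool)

lemma bell11: "bell 1 1 = (\<lambda>(r,t). if r = t then 0 else if r then - complex_of_real (1/sqrt 2) else complex_of_real (1/sqrt 2))"
  by (auto simp: fun_eq_iff bell_def XZpow_def mmult2_def pauli_X_def pauli_Z_def phi_plus_def UNIV_bool)

lemma proj00: "proj (bell 0 0) x y = (if fst x = snd x \<and> fst y = snd y then 1/2 else 0)"
proof -
  have "complex_of_real (1/sqrt 2) * complex_of_real (1/sqrt 2) = 1/2"
    by (simp flip: of_real_mult)
  then show ?thesis
    by (cases x; cases y) (auto simp: proj_def bell00)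
qed

definition ptrA :: "qop \<Rightarrow> bool \<Rightarrow> bool \<Rightarrow> complex" where
  "ptrA X a a' = (\<Sum>b\<in>UNIV. X (a,b) (a',b))"

lemma N_formula: "swap_num 0 0 X Y = (1/4) * (\<Sum>x\<in>UNIV. \<Sum>y\<in>UNIV. X x y * Y x y)"
  unfolding swap_num_def proj00 by (simp add: UNIV_bool UNIV_Times_UNIV[symmetric] algebra_simps)

lemma P_formula: "swap_prob 0 0 X Y = (1/2) * (\<Sum>a\<in>UNIV. \<Sum>a'\<in>UNIV. ptrA X a' a * ptrA Y a' a)"
  unfolding swap_prob_def proj00 ptrA_def by (simp add: UNIV_bool UNIV_Times_UNIV[symmetric] algebra_simps)



abbreviation "Phi \<equiv> proj (bell 0 0)"

lemma sum_PhiPhi: "(\<Sum>x\<in>UNIV. \<Sum>y\<in>UNIV. Phi x y * Phi x y) = 1"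
  by (simp add: proj00 UNIV_bool UNIV_Times_UNIV[symmetric])

lemma sum_Phi_sig: "(\<Sum>x\<in>UNIV. \<Sum>y\<in>UNIV. Phi x y * S x y) = expval S (bell 0 0)"
proof -
  have "complex_of_real (1/sqrt 2) * complex_of_real (1/sqrt 2) = 1/2"
    by (simp flip: of_real_mult)
  then show ?thesis
    unfolding proj00 by (simp add: expval_def bell00 UNIV_bool UNIV_Times_UNIV[symmetric] algebra_simps)
qed

lemma N_decomp:
  "swap_num 0 0 (\<lambda>x y. a * Phi x y + c * S1 x y) (\<lambda>x y. a * Phi x y + c * S2 x y)
   = a * a / 4 + a * c / 4 * (expval S1 (bell 0 0) + expval S2 (bell 0 0)) + c * c * swap_num 0 0 S1 S2"
proof -
  have "(\<Sum>x\<in>UNIV. \<Sum>y\<in>UNIV. (a * Phi x y + c * S1 x y) * (a * Phi x y + c * S2 x y))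
     = a * a * (\<Sum>x\<in>UNIV. \<Sum>y\<in>UNIV. Phi x y * Phi x y) + a * c * (\<Sum>x\<in>UNIV. \<Sum>y\<in>UNIV. Phi x y * S2 x y)
       + a * c * (\<Sum>x\<in>UNIV. \<Sum>y\<in>UNIV. Phi x y * S1 x y) + c * c * (\<Sum>x\<in>UNIV. \<Sum>y\<in>UNIV. S1 x y * S2 x y)"
    by (simp add: sum.distrib sum_distrib_left algebra_simps)
  then show ?thesis unfolding N_formula sum_PhiPhi sum_Phi_sig by (simp add: algebra_simps)
qed

lemma ptrA_lin: "ptrA (\<lambda>x y. a * X x y + c * Y x y) u w = a * ptrA X u w + c * ptrA Y u w"
  unfolding ptrA_def by (simp add: sum.distrib sum_distrib_left)

lemma ptrA_Phi: "ptrA Phi u w = (if u = w then 1/2 else 0)"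
  unfolding ptrA_def by (simp add: proj00 UNIV_bool)

lemma sum_ptrA_Phi: "(\<Sum>u\<in>UNIV. \<Sum>w\<in>UNIV. ptrA Phi w u * ptrA S w u) = trace_op S / 2"
  unfolding ptrA_Phi by (simp add: ptrA_def trace_op_def UNIV_bool UNIV_Times_UNIV[symmetric] algebra_simps)

lemma P_decomp:
  "swap_prob 0 0 (\<lambda>x y. a * Phi x y + c * S1 x y) (\<lambda>x y. a * Phi x y + c * S2 x y)
   = a * a / 4 + a * c / 4 * (trace_op S1 + trace_op S2) + c * c * swap_prob 0 0 S1 S2"
proof -
  have 1: "(\<Sum>u\<in>UNIV. \<Sum>w\<in>UNIV. ptrA Phi w u * ptrA Phi w u) = 1/2"
    unfolding ptrA_Phi by (simp add: UNIV_bool)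
  have 2: "(\<Sum>u\<in>UNIV. \<Sum>w\<in>UNIV. ptrA S w u * ptrA Phi w u) = trace_op S / 2" for S
    using sum_ptrA_Phi[of S] by (simp add: mult.commute)
  have "(\<Sum>u\<in>UNIV. \<Sum>w\<in>UNIV. (a * ptrA Phi w u + c * ptrA S1 w u) * (a * ptrA Phi w u + c * ptrA S2 w u))
     = a * a * (\<Sum>u\<in>UNIV. \<Sum>w\<in>UNIV. ptrA Phi w u * ptrA Phi w u) + a * c * (\<Sum>u\<in>UNIV. \<Sum>w\<in>UNIV. ptrA Phi w u * ptrA S2 w u)
       + a * c * (\<Sum>u\<in>UNIV. \<Sum>w\<in>UNIV. ptrA S1 w u * ptrA Phi w u) + c * c * (\<Sum>u\<in>UNIV. \<Sum>w\<in>UNIV. ptrA S1 w u * ptrA S2 w u)"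
    by (simp add: sum.distrib sum_distrib_left algebra_simps)
  then show ?thesis unfolding P_formula ptrA_lin 1 2 sum_ptrA_Phi by (simp add: algebra_simps)
qed

lemma expval_decomp:
  "expval (\<lambda>x y. a * Phi x y + c * S x y) (bell 0 0) = a + c * expval S (bell 0 0)"
proof -
  have "expval (\<lambda>x y. a * Phi x y + c * S x y) (bell 0 0) = a * expval Phi (bell 0 0) + c * expval S (bell 0 0)"
    unfolding expval_def by (simp add: sum.distrib sum_distrib_left algebra_simps)
  moreover have "expval Phi (bell 0 0) = 1"
    using sum_Phi_sig[of Phi] sum_PhiPhi by simp
  ultimately show ?thesis by simp
qed



lemma swap4: "(\<Sum>x\<in>A. \<Sum>y\<in>B. \<Sum>j\<in>C. \<Sum>k\<in>D. T x y j k) = (\<Sum>j\<in>C. \<Sum>k\<in>D. \<Sum>x\<in>A. \<Sum>y\<in>B. T x y j k)"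
proof -
  have "(\<Sum>x\<in>A. \<Sum>y\<in>B. \<Sum>j\<in>C. \<Sum>k\<in>D. T x y j k) = (\<Sum>x\<in>A. \<Sum>j\<in>C. \<Sum>y\<in>B. \<Sum>k\<in>D. T x y j k)"
    by (rule sum.cong[OF refl], rule sum.swap)
  also have "\<dots> = (\<Sum>j\<in>C. \<Sum>x\<in>A. \<Sum>y\<in>B. \<Sum>k\<in>D. T x y j k)" by (rule sum.swap)
  also have "\<dots> = (\<Sum>j\<in>C. \<Sum>x\<in>A. \<Sum>k\<in>D. \<Sum>y\<in>B. T x y j k)"
    by (intro sum.cong refl sum.swap)
  also have "\<dots> = (\<Sum>j\<in>C. \<Sum>k\<in>D. \<Sum>x\<in>A. \<Sum>y\<in>B. T x y j k)"
    by (intro sum.cong refl sum.swap)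
  finally show ?thesis .
qed

definition pr :: "qvec \<Rightarrow> qop" where "pr f = (\<lambda>x y. f x * cnj (f y))"

lemma N_bilin:
  "swap_num 0 0 (\<lambda>x y. \<Sum>j<m. pr (f j) x y) (\<lambda>x y. \<Sum>k<l. pr (g k) x y)
   = (\<Sum>j<m. \<Sum>k<l. swap_num 0 0 (pr (f j)) (pr (g k)))"
proof -
  have "(\<Sum>x\<in>UNIV. \<Sum>y\<in>UNIV. (\<Sum>j<m. pr (f j) x y) * (\<Sum>k<l. pr (g k) x y))
     = (\<Sum>x\<in>UNIV. \<Sum>y\<in>UNIV. \<Sum>j<m. \<Sum>k<l. pr (f j) x y * pr (g k) x y)"
    by (simp only: sum_product)
  also have "\<dots> = (\<Sum>j<m. \<Sum>k<l. \<Sum>x\<in>UNIV. \<Sum>y\<in>UNIV. pr (f j) x y * pr (g k) x y)"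
    by (rule swap4)
  finally show ?thesis unfolding N_formula by (simp add: sum_distrib_left)
qed

lemma ptrA_sum: "ptrA (\<lambda>x y. \<Sum>j<m. A j x y) u w = (\<Sum>j<m. ptrA (A j) u w)"
  unfolding ptrA_def by (rule sum.swap)

lemma P_bilin:
  "swap_prob 0 0 (\<lambda>x y. \<Sum>j<m. pr (f j) x y) (\<lambda>x y. \<Sum>k<l. pr (g k) x y)
   = (\<Sum>j<m. \<Sum>k<l. swap_prob 0 0 (pr (f j)) (pr (g k)))"
proof -
  have "(\<Sum>x\<in>UNIV. \<Sum>y\<in>UNIV. (\<Sum>j<m. ptrA (pr (f j)) y x) * (\<Sum>k<l. ptrA (pr (g k)) y x))
     = (\<Sum>x\<in>UNIV. \<Sum>y\<in>UNIV. \<Sum>j<m. \<Sum>k<l. ptrA (pr (f j)) y x * ptrA (pr (g k)) y x)"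
    by (simp only: sum_product)
  also have "\<dots> = (\<Sum>j<m. \<Sum>k<l. \<Sum>x\<in>UNIV. \<Sum>y\<in>UNIV. ptrA (pr (f j)) y x * ptrA (pr (g k)) y x)"
    by (rule swap4)
  finally show ?thesis unfolding P_formula ptrA_sum by (simp add: sum_distrib_left)
qed

definition Mm :: "qvec \<Rightarrow> qvec \<Rightarrow> bool \<Rightarrow> bool \<Rightarrow> complex" where
  "Mm f g b b' = (\<Sum>a\<in>UNIV. f (a,b) * g (a,b'))"

lemma N_pure: "swap_num 0 0 (pr f) (pr g) = (1/4) * ((Mm f g True True + Mm f g False False) * cnj (Mm f g True True + Mm f g False False))"
  unfolding N_formula pr_def Mm_def
  by (simp add: UNIV_bool UNIV_Times_UNIV[symmetric] algebra_simps)

lemma P_pure: "swap_prob 0 0 (pr f) (pr g) = (1/2) * (\<Sum>b\<in>UNIV. \<Sum>b'\<in>UNIV. Mm f g b b' * cnj (Mm f g b b'))"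
  unfolding P_formula pr_def Mm_def ptrA_def
  by (simp add: UNIV_bool algebra_simps)

lemma sum_fg: "(\<Sum>x\<in>UNIV. f x * g x) = Mm f g True True + Mm f g False False"
  unfolding Mm_def by (simp add: UNIV_bool UNIV_Times_UNIV[symmetric] algebra_simps)



lemma cs_sum:
  fixes f g :: "'a \<Rightarrow> complex"
  shows "(cmod (\<Sum>x\<in>A. f x * g x))\<^sup>2 \<le> (\<Sum>x\<in>A. (cmod (f x))\<^sup>2) * (\<Sum>x\<in>A. (cmod (g x))\<^sup>2)"
proof -
  have "cmod (\<Sum>x\<in>A. f x * g x) \<le> (\<Sum>x\<in>A. cmod (f x * g x))" by (rule norm_sum)
  also have "\<dots> = (\<Sum>x\<in>A. \<bar>cmod (f x)\<bar> * \<bar>cmod (g x)\<bar>)" by (simp add: norm_mult)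
  also have "\<dots> \<le> L2_set (\<lambda>x. cmod (f x)) A * L2_set (\<lambda>x. cmod (g x)) A" by (rule L2_set_mult_ineq)
  finally have h: "cmod (\<Sum>x\<in>A. f x * g x) \<le> L2_set (\<lambda>x. cmod (f x)) A * L2_set (\<lambda>x. cmod (g x)) A" .
  have "(cmod (\<Sum>x\<in>A. f x * g x))\<^sup>2 \<le> (L2_set (\<lambda>x. cmod (f x)) A * L2_set (\<lambda>x. cmod (g x)) A)\<^sup>2"
    by (rule power_mono[OF h norm_ge_zero])
  also have "\<dots> = (\<Sum>x\<in>A. (cmod (f x))\<^sup>2) * (\<Sum>x\<in>A. (cmod (g x))\<^sup>2)"
    unfolding L2_set_def power_mult_distrib by (simp add: sum_nonneg)
  finally show ?thesis .
qed

lemma aux_lin: "(0::real) \<le> b \<Longrightarrow> x \<le> 2 * a \<Longrightarrow> 1/4 * x \<le> 1/2 * (a + b)"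
  by argo

lemma pure_bounds:
  "swap_num 0 0 (pr f) (pr g) = complex_of_real ((1/4) * (cmod (Mm f g True True + Mm f g False False))\<^sup>2)"
  "swap_prob 0 0 (pr f) (pr g) = complex_of_real ((1/2) * (\<Sum>b\<in>UNIV. \<Sum>b'\<in>UNIV. (cmod (Mm f g b b'))\<^sup>2))"
    "(1/4) * (cmod (Mm f g True True + Mm f g False False))\<^sup>2 \<le> (1/2) * (\<Sum>b\<in>UNIV. \<Sum>b'\<in>UNIV. (cmod (Mm f g b b'))\<^sup>2)"
    "(1/4) * (cmod (Mm f g True True + Mm f g False False))\<^sup>2 \<le> (1/4) * (\<Sum>x\<in>UNIV. (cmod (f x))\<^sup>2) * (\<Sum>x\<in>UNIV. (cmod (g x))\<^sup>2)"
proof -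
  show "swap_num 0 0 (pr f) (pr g) = complex_of_real ((1/4) * (cmod (Mm f g True True + Mm f g False False))\<^sup>2)"
    unfolding N_pure complex_norm_square[symmetric] by simp
  show "swap_prob 0 0 (pr f) (pr g) = complex_of_real ((1/2) * (\<Sum>b\<in>UNIV. \<Sum>b'\<in>UNIV. (cmod (Mm f g b b'))\<^sup>2))"
    unfolding P_pure complex_norm_square[symmetric] by simp
  have t: "(cmod (z + w))\<^sup>2 \<le> 2 * ((cmod z)\<^sup>2 + (cmod w)\<^sup>2)" for z w :: complex
  proof -
    have "cmod (z + w) \<le> cmod z + cmod w" by (rule norm_triangle_ineq)
    then have "(cmod (z + w))\<^sup>2 \<le> (cmod z + cmod w)\<^sup>2" by (rule power_mono) simp
    also have "\<dots> \<le> 2 * ((cmod z)\<^sup>2 + (cmod w)\<^sup>2)"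
      using sum_squares_ge_zero[of "cmod z - cmod w" 0] by (simp add: power2_eq_square algebra_simps)
    finally show ?thesis .
  qed
  show "(1/4) * (cmod (Mm f g True True + Mm f g False False))\<^sup>2 \<le> (1/2) * (\<Sum>b\<in>UNIV. \<Sum>b'\<in>UNIV. (cmod (Mm f g b b'))\<^sup>2)"
  proof -
    have e: "(\<Sum>b\<in>UNIV. \<Sum>b'\<in>UNIV. (cmod (Mm f g b b'))\<^sup>2) = (cmod (Mm f g True True))\<^sup>2 + (cmod (Mm f g False False))\<^sup>2
       + ((cmod (Mm f g True False))\<^sup>2 + (cmod (Mm f g False True))\<^sup>2)"
      by (simp add: UNIV_bool)
    have "0 \<le> (cmod (Mm f g True False))\<^sup>2 + (cmod (Mm f g False True))\<^sup>2" by simp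
    moreover have "(cmod (Mm f g True True + Mm f g False False))\<^sup>2 \<le> 2 * ((cmod (Mm f g True True))\<^sup>2 + (cmod (Mm f g False False))\<^sup>2)"
      by (rule t)
    ultimately show ?thesis unfolding e by (intro aux_lin)
  qed
  show "(1/4) * (cmod (Mm f g True True + Mm f g False False))\<^sup>2 \<le> (1/4) * (\<Sum>x\<in>UNIV. (cmod (f x))\<^sup>2) * (\<Sum>x\<in>UNIV. (cmod (g x))\<^sup>2)"
    using cs_sum[of f g UNIV] unfolding sum_fg by simp
qed

lemma trace_fact:
  assumes "\<And>x y. S x y = (\<Sum>j<m. f j x * cnj (f j y))"
  shows "trace_op S = complex_of_real (\<Sum>j<m. \<Sum>x\<in>UNIV. (cmod (f j x))\<^sup>2)"
proof -
  have "trace_op S = (\<Sum>x\<in>UNIV. \<Sum>j<m. f j x * cnj (f j x))" unfolding trace_op_def assms ..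
  also have "\<dots> = (\<Sum>j<m. \<Sum>x\<in>UNIV. f j x * cnj (f j x))" by (rule sum.swap)
  also have "\<dots> = complex_of_real (\<Sum>j<m. \<Sum>x\<in>UNIV. (cmod (f j x))\<^sup>2)"
    by (simp only: of_real_sum complex_norm_square)
  finally show ?thesis .
qed

lemma swap_bounds:
  assumes "density_op S1" "density_op S2"
  shows "\<exists>q n. swap_prob 0 0 S1 S2 = complex_of_real q \<and> swap_num 0 0 S1 S2 = complex_of_real n
           \<and> 0 \<le> n \<and> n \<le> q \<and> n \<le> 1/4"
proof -
  obtain m :: nat and f where f: "\<And>x y. S1 x y = (\<Sum>j<m. f j x * cnj (f j y))"
    using factor[of S1] assms(1) unfolding density_op_def psd_gpsd by blast
  obtain l :: nat and g where g: "\<And>x y. S2 x y = (\<Sum>k<l. g k x * cnj (g k y))"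
    using factor[of S2] assms(2) unfolding density_op_def psd_gpsd by blast
  have S1e: "S1 = (\<lambda>x y. \<Sum>j<m. pr (f j) x y)" using f by (simp add: fun_eq_iff pr_def)
  have S2e: "S2 = (\<lambda>x y. \<Sum>k<l. pr (g k) x y)" using g by (simp add: fun_eq_iff pr_def)
  define nn where "nn j k = (1/4) * (cmod (Mm (f j) (g k) True True + Mm (f j) (g k) False False))\<^sup>2" for j k
  define qq where "qq j k = (1/2) * (\<Sum>b\<in>UNIV. \<Sum>b'\<in>UNIV. (cmod (Mm (f j) (g k) b b'))\<^sup>2)" for j k
  define nf where "nf j = (\<Sum>x\<in>UNIV. (cmod (f j x))\<^sup>2)" for j
  define ng where "ng k = (\<Sum>x\<in>UNIV. (cmod (g k x))\<^sup>2)" for k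
  have N: "swap_num 0 0 S1 S2 = complex_of_real (\<Sum>j<m. \<Sum>k<l. nn j k)"
    unfolding S1e S2e N_bilin pure_bounds(1) nn_def by simp
  have P: "swap_prob 0 0 S1 S2 = complex_of_real (\<Sum>j<m. \<Sum>k<l. qq j k)"
    unfolding S1e S2e P_bilin pure_bounds(2) qq_def by simp
  have "trace_op S1 = complex_of_real (\<Sum>j<m. nf j)" unfolding nf_def by (rule trace_fact[where S=S1 and m=m and f=f]) (rule f)
  then have "complex_of_real (\<Sum>j<m. nf j) = 1" using assms(1) by (metis density_op_def)
  then have t1: "(\<Sum>j<m. nf j) = 1" by (metis of_real_eq_1_iff)
  have "trace_op S2 = complex_of_real (\<Sum>k<l. ng k)" unfolding ng_def by (rule trace_fact[where S=S2 and m=l and f=g]) (rule g)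
  then have "complex_of_real (\<Sum>k<l. ng k) = 1" using assms(2) by (metis density_op_def)
  then have t2: "(\<Sum>k<l. ng k) = 1" by (metis of_real_eq_1_iff)
  have "(\<Sum>j<m. \<Sum>k<l. nn j k) \<le> (\<Sum>j<m. \<Sum>k<l. (1/4) * nf j * ng k)"
    unfolding nn_def nf_def ng_def by (intro sum_mono pure_bounds(4))
  also have "\<dots> = (1/4) * (\<Sum>j<m. nf j) * (\<Sum>k<l. ng k)"
    by (simp add: sum_distrib_left sum_distrib_right mult.assoc sum.swap[of _ "{..<l}"])
  finally have n4: "(\<Sum>j<m. \<Sum>k<l. nn j k) \<le> 1/4" using t1 t2 by simp
  have nq: "(\<Sum>j<m. \<Sum>k<l. nn j k) \<le> (\<Sum>j<m. \<Sum>k<l. qq j k)"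
    unfolding nn_def qq_def by (intro sum_mono pure_bounds(3))
  have n0: "0 \<le> (\<Sum>j<m. \<Sum>k<l. nn j k)"
    unfolding nn_def by (intro sum_nonneg) simp
  show ?thesis using N P n4 nq n0 by blast
qed



lemma main_real:
  fixes p F q n :: real
  assumes "0 \<le> p" "p \<le> F" "F \<le> 1" "0 \<le> n" "n \<le> q" "n \<le> 1/4"
    and Pne: "p^2/4 + p*(1-p)/2 + (1-p)^2*q \<noteq> 0"
  shows "0 < p^2/4 + p*(1-p)/2 + (1-p)^2*q"
    and "(p^2/4 + p*(F-p)/2 + (1-p)^2*n) / (p^2/4 + p*(1-p)/2 + (1-p)^2*q) \<le> 1 - 2*p*(1-F)"
proof -
  define Pr where "Pr = p^2/4 + p*(1-p)/2 + (1-p)^2*q"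
  define Nr where "Nr = p^2/4 + p*(F-p)/2 + (1-p)^2*n"
  have p1: "p \<le> 1" using assms by argo
  have "0 \<le> Pr" unfolding Pr_def using assms p1
    by (intro add_nonneg_nonneg mult_nonneg_nonneg) auto
  then show Ppos: "0 < p^2/4 + p*(1-p)/2 + (1-p)^2*q" using Pne Pr_def by argo
  define X where "X = (q - n) + p*(1-F)*(1/2 - 2*q)"
  have key: "(1 - 2*p*(1-F)) * Pr - Nr = (1-p)^2 * X"
    unfolding Pr_def Nr_def X_def by (simp add: field_simps power2_eq_square)
  have k0: "0 \<le> p*(1-F)" using assms by simp
  have k1: "p*(1-F) \<le> 1/4"
  proof -
    have "p*(1-F) \<le> F*(1-F)" using assms by (intro mult_right_mono) auto
    also have "\<dots> \<le> 1/4" using sum_squares_ge_zero[of "F - 1/2" 0] by (simp add: power2_eq_square algebra_simps)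
    finally show ?thesis .
  qed
  have X0: "0 \<le> X"
  proof (cases "q \<le> 1/4")
    case True
    then have "0 \<le> p*(1-F)*(1/2 - 2*q)" using k0 by simp
    then show ?thesis unfolding X_def using assms by argo
  next
    case False
    then have "p*(1-F)*(1/2 - 2*q) \<ge> 1/4 * (1/2 - 2*q)"
      using k1 by (intro mult_right_mono_neg) auto
    then show ?thesis unfolding X_def using assms False by argo
  qed
  have "Nr \<le> (1 - 2*p*(1-F)) * Pr" using key X0 by (smt (verit) zero_le_power2 mult_nonneg_nonneg)
  then show "(p^2/4 + p*(F-p)/2 + (1-p)^2*n) / (p^2/4 + p*(1-p)/2 + (1-p)^2*q) \<le> 1 - 2*p*(1-F)"
    using Ppos unfolding Pr_def[symmetric] Nr_def[symmetric] by (simp add: pos_divide_le_eq)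
qed



lemma S_setD:
  assumes "\<rho> \<in> S_set p F"
  obtains \<sigma> where "density_op \<sigma>" "\<rho> = (\<lambda>x y. complex_of_real p * Phi x y + complex_of_real (1 - p) * \<sigma> x y)"
    "complex_of_real (1 - p) * expval \<sigma> (bell 0 0) = complex_of_real (F - p)"
proof -
  from assms obtain \<sigma> where s: "density_op \<sigma>"
    "\<rho> = (\<lambda>x y. complex_of_real p * Phi x y + complex_of_real (1 - p) * \<sigma> x y)"
    and e: "expval \<rho> (bell 0 0) = complex_of_real F"
    unfolding S_set_def by blast
  have "complex_of_real p + complex_of_real (1 - p) * expval \<sigma> (bell 0 0) = complex_of_real F"
    using e unfolding s(2) expval_decomp .
  then have "complex_of_real (1 - p) * expval \<sigma> (bell 0 0) = complex_of_real (F - p)"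
    by (simp add: algebra_simps)
  then show ?thesis using that s by blast
qed

lemma NP_rho:
  assumes "\<rho>1 \<in> S_set p F" "\<rho>2 \<in> S_set p F"
  shows "\<exists>q n. swap_prob 0 0 \<rho>1 \<rho>2 = complex_of_real (p^2/4 + p*(1-p)/2 + (1-p)^2*q)
     \<and> swap_num 0 0 \<rho>1 \<rho>2 = complex_of_real (p^2/4 + p*(F-p)/2 + (1-p)^2*n)
     \<and> 0 \<le> n \<and> n \<le> q \<and> n \<le> 1/4"
proof -
  obtain \<sigma>1 where s1: "density_op \<sigma>1" "\<rho>1 = (\<lambda>x y. complex_of_real p * Phi x y + complex_of_real (1 - p) * \<sigma>1 x y)"
    "complex_of_real (1 - p) * expval \<sigma>1 (bell 0 0) = complex_of_real (F - p)"
    using S_setD[OF assms(1)] by blast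
  obtain \<sigma>2 where s2: "density_op \<sigma>2" "\<rho>2 = (\<lambda>x y. complex_of_real p * Phi x y + complex_of_real (1 - p) * \<sigma>2 x y)"
    "complex_of_real (1 - p) * expval \<sigma>2 (bell 0 0) = complex_of_real (F - p)"
    using S_setD[OF assms(2)] by blast
  obtain q n where qn: "swap_prob 0 0 \<sigma>1 \<sigma>2 = complex_of_real q" "swap_num 0 0 \<sigma>1 \<sigma>2 = complex_of_real n"
    "0 \<le> n" "n \<le> q" "n \<le> 1/4"
    using swap_bounds[OF s1(1) s2(1)] by blast
  have tr: "trace_op \<sigma>1 = 1" "trace_op \<sigma>2 = 1" using s1(1) s2(1) unfolding density_op_def by auto
  have "swap_num 0 0 \<rho>1 \<rho>2 = complex_of_real p * complex_of_real p / 4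
      + complex_of_real p / 4 * (complex_of_real (1 - p) * expval \<sigma>1 (bell 0 0) + complex_of_real (1 - p) * expval \<sigma>2 (bell 0 0))
      + complex_of_real (1 - p) * complex_of_real (1 - p) * swap_num 0 0 \<sigma>1 \<sigma>2"
    unfolding s1(2) s2(2) N_decomp by (simp add: field_simps)
  also have "\<dots> = complex_of_real (p^2/4 + p*(F-p)/2 + (1-p)^2*n)"
    unfolding s1(3) s2(3) qn(2) by (simp add: power2_eq_square field_simps)
  finally have N: "swap_num 0 0 \<rho>1 \<rho>2 = complex_of_real (p^2/4 + p*(F-p)/2 + (1-p)^2*n)" .
  have "swap_prob 0 0 \<rho>1 \<rho>2 = complex_of_real (p^2/4 + p*(1-p)/2 + (1-p)^2*q)"
    unfolding s1(2) s2(2) P_decomp tr qn(1) by (simp add: power2_eq_square field_simps)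
  then show ?thesis using N qn by blast
qed

lemma part1:
  assumes "0 \<le> p" "p \<le> F" "F \<le> 1" "\<rho>1 \<in> S_set p F" "\<rho>2 \<in> S_set p F" "swap_prob 0 0 \<rho>1 \<rho>2 \<noteq> 0"
  shows "swap_fid 0 0 \<rho>1 \<rho>2 \<in> \<real> \<and> Re (swap_fid 0 0 \<rho>1 \<rho>2) \<le> 1 - 2 * p * (1 - F)"
proof -
  obtain q n where P: "swap_prob 0 0 \<rho>1 \<rho>2 = complex_of_real (p^2/4 + p*(1-p)/2 + (1-p)^2*q)"
     and N: "swap_num 0 0 \<rho>1 \<rho>2 = complex_of_real (p^2/4 + p*(F-p)/2 + (1-p)^2*n)"
     and b: "0 \<le> n" "n \<le> q" "n \<le> 1/4"
    using NP_rho[OF assms(4,5)] by blast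
  have Pne: "p^2/4 + p*(1-p)/2 + (1-p)^2*q \<noteq> 0" using assms(6) P by (metis of_real_0)
  have fid: "swap_fid 0 0 \<rho>1 \<rho>2 = complex_of_real ((p^2/4 + p*(F-p)/2 + (1-p)^2*n) / (p^2/4 + p*(1-p)/2 + (1-p)^2*q))"
    unfolding swap_fid_def P N by simp
  show ?thesis unfolding fid using main_real(2)[OF assms(1,2,3) b Pne] by simp
qed



definition psr :: "real \<Rightarrow> real \<Rightarrow> bool \<times> bool \<Rightarrow> real" where
  "psr c d = (\<lambda>(r,t). if r = t then c else if r then - d else d)"

lemma psi_eq:
  "(\<lambda>x. complex_of_real a * bell 0 0 x + complex_of_real b * bell 1 1 x)
   = (\<lambda>x. complex_of_real (psr (a / sqrt 2) (b / sqrt 2) x))"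
  unfolding bell00 bell11 by (auto simp: fun_eq_iff psr_def)

lemma proj_real: "proj (\<lambda>x. complex_of_real (f x)) = (\<lambda>x y. complex_of_real (f x * f y))"
  by (simp add: fun_eq_iff proj_def)

lemma psr_N: "swap_num 0 0 (\<lambda>x y. complex_of_real (psr c d x * psr c d y)) (\<lambda>x y. complex_of_real (psr c d x * psr c d y))
   = complex_of_real ((1/4) * (2*c^2 + 2*d^2)^2)"
  unfolding N_formula psr_def
  by (simp add: UNIV_bool UNIV_Times_UNIV[symmetric] power2_eq_square algebra_simps)

lemma psr_P: "swap_prob 0 0 (\<lambda>x y. complex_of_real (psr c d x * psr c d y)) (\<lambda>x y. complex_of_real (psr c d x * psr c d y))
   = complex_of_real ((1/2) * 2 * (c^2 + d^2)^2)"
  unfolding P_formula psr_def ptrA_def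
  by (simp add: UNIV_bool power2_eq_square algebra_simps)

lemma psr_tr: "trace_op (\<lambda>x y. complex_of_real (psr c d x * psr c d y)) = complex_of_real (2*c^2 + 2*d^2)"
  unfolding trace_op_def psr_def
  by (simp add: UNIV_bool UNIV_Times_UNIV[symmetric] power2_eq_square algebra_simps)

lemma psr_ev: "expval (\<lambda>x y. complex_of_real (psr c d x * psr c d y)) (bell 0 0) = complex_of_real (2 * c^2)"
proof -
  have s: "complex_of_real (1/sqrt 2) * complex_of_real (1/sqrt 2) = 1/2"
    by (simp flip: of_real_mult)
  have s2: "complex_of_real (sqrt 2) * complex_of_real (sqrt 2) = 2"
    by (simp flip: of_real_mult)
  show ?thesis
    unfolding expval_def psr_def bell00
    by (simp add: UNIV_bool UNIV_Times_UNIV[symmetric] power2_eq_square algebra_simps s s2)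
qed

lemma trace_Phi: "trace_op Phi = 1"
  unfolding trace_op_def proj00 by (simp add: UNIV_bool UNIV_Times_UNIV[symmetric])

lemma gpsd_proj: "gpsd (proj v)"
proof -
  have e: "qf (proj v) w = (\<Sum>x\<in>UNIV. cnj (w x) * v x) * cnj (\<Sum>y\<in>UNIV. cnj (w y) * v y)" for w
    unfolding qf_def proj_def by (simp add: sum_product algebra_simps)
  have "qf (proj v) w = complex_of_real ((cmod (\<Sum>x\<in>UNIV. cnj (w x) * v x))^2)" for w
    unfolding complex_norm_square by (rule e)
  then show ?thesis unfolding gpsd_def by simp
qed

lemma expval_lin: "expval (\<lambda>x y. a * A x y + c * B x y) v = a * expval A v + c * expval B v"
  unfolding expval_def by (simp add: sum.distrib sum_distrib_left algebra_simps)

lemma trace_lin: "trace_op (\<lambda>x y. a * A x y + c * B x y) = a * trace_op A + c * trace_op B"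
  unfolding trace_op_def by (simp add: sum.distrib sum_distrib_left)

lemma psd_comb:
  assumes "psd A" "psd B" "0 \<le> a" "0 \<le> c"
  shows "psd (\<lambda>x y. complex_of_real a * A x y + complex_of_real c * B x y)"
  unfolding psd_def expval_lin using assms unfolding psd_def by simp

lemma ropt:
  fixes p F :: real
  assumes "0 \<le> p" "p \<le> F" "F \<le> 1"
  defines "Ft \<equiv> (F - p) / (1 - p)"
  defines "\<psi> \<equiv> (\<lambda>x. complex_of_real (sqrt Ft) * bell 0 0 x + complex_of_real (sqrt (1 - Ft)) * bell 1 1 x)"
  defines "\<rho> \<equiv> (\<lambda>x y. complex_of_real p * proj (bell 0 0) x y + complex_of_real (1 - p) * proj \<psi> x y)"
  shows "\<rho> \<in> S_set p F \<and> swap_prob 0 0 \<rho> \<rho> \<noteq> 0 \<and> swap_fid 0 0 \<rho> \<rho> = complex_of_real (1 - 2 * p * (1 - F))"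
proof -
  have Ft: "0 \<le> Ft" "Ft \<le> 1" "(1 - p) * Ft = F - p"
  proof -
    show "0 \<le> Ft" unfolding Ft_def using assms(1-3) by (cases "p = 1") auto
    show "Ft \<le> 1" unfolding Ft_def using assms(1-3) by (cases "p = 1") (auto simp: divide_le_eq)
    show "(1 - p) * Ft = F - p" unfolding Ft_def using assms(1-3) by (cases "p = 1") auto
  qed
  define c where "c = sqrt Ft / sqrt 2"
  define d where "d = sqrt (1 - Ft) / sqrt 2"
  have c2: "c^2 = Ft / 2" unfolding c_def using Ft by (simp add: power_divide)
  have d2: "d^2 = (1 - Ft) / 2" unfolding d_def using Ft by (simp add: power_divide)
  have psi: "proj \<psi> = (\<lambda>x y. complex_of_real (psr c d x * psr c d y))"
    unfolding \<psi>_def psi_eq proj_real c_def d_def ..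
  have trpsi: "trace_op (proj \<psi>) = 1"
  proof -
    have "2 * (Ft / 2) + 2 * ((1 - Ft) / 2) = (1::real)" by argo
    then show ?thesis unfolding psi psr_tr c2 d2 by (metis of_real_1)
  qed
  have evpsi: "expval (proj \<psi>) (bell 0 0) = complex_of_real Ft" unfolding psi psr_ev c2 by simp
  have Npsi: "swap_num 0 0 (proj \<psi>) (proj \<psi>) = 1/4" unfolding psi psr_N c2 d2 by (simp add: field_simps)
  have Ppsi: "swap_prob 0 0 (proj \<psi>) (proj \<psi>) = 1/4" unfolding psi psr_P c2 d2
    by (simp add: field_simps)
  have p1: "p \<le> 1" using assms by argo
  have dens: "density_op \<rho>"
    unfolding density_op_def
  proof
    show "psd \<rho>" unfolding \<rho>_def
      by (rule psd_comb) (use gpsd_proj psd_gpsd assms p1 in auto)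
    show "trace_op \<rho> = 1" unfolding \<rho>_def trace_lin trace_Phi trpsi by simp
  qed
  have denspsi: "density_op (proj \<psi>)" unfolding density_op_def psd_gpsd using gpsd_proj trpsi by simp
  have ev: "expval \<rho> (bell 0 0) = complex_of_real F"
  proof -
    have "expval \<rho> (bell 0 0) = complex_of_real p + complex_of_real (1 - p) * complex_of_real Ft"
      unfolding \<rho>_def expval_decomp evpsi ..
    also have "\<dots> = complex_of_real (p + (1 - p) * Ft)" by simp
    finally show ?thesis unfolding Ft(3) by simp
  qed
  have inS: "\<rho> \<in> S_set p F" unfolding S_set_def using dens denspsi ev \<rho>_def by blast
  have P: "swap_prob 0 0 \<rho> \<rho> = 1/4"
    unfolding \<rho>_def P_decomp trpsi Ppsi by (simp add: field_simps)
  have "swap_num 0 0 \<rho> \<rho> = complex_of_real p * complex_of_real p / 4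
     + complex_of_real p / 2 * (complex_of_real (1 - p) * complex_of_real Ft) + complex_of_real (1 - p) * complex_of_real (1 - p) / 4"
    unfolding \<rho>_def N_decomp evpsi Npsi by (simp add: field_simps)
  also have "\<dots> = complex_of_real ((p^2 + 2 * p * (F - p) + (1 - p)^2) / 4)"
    unfolding of_real_mult[symmetric] Ft(3) by (simp add: field_simps power2_eq_square)
  finally have N: "swap_num 0 0 \<rho> \<rho> = complex_of_real ((p^2 + 2 * p * (F - p) + (1 - p)^2) / 4)" .
  have fid: "swap_fid 0 0 \<rho> \<rho> = complex_of_real (1 - 2 * p * (1 - F))"
    unfolding swap_fid_def P N by (simp add: field_simps power2_eq_square)
  have "swap_prob 0 0 \<rho> \<rho> \<noteq> 0" unfolding P by simp
  then show ?thesis using inS fid by blast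
qed


theorem theorem3:
  fixes p F :: real
  assumes "0 \<le> F" and "F \<le> 1" and "0 \<le> p" and "p \<le> F"
  shows "(\<forall>\<rho>1\<in>S_set p F. \<forall>\<rho>2\<in>S_set p F. swap_prob 0 0 \<rho>1 \<rho>2 \<noteq> 0 \<longrightarrow>
             swap_fid 0 0 \<rho>1 \<rho>2 \<in> \<real> \<and> Re (swap_fid 0 0 \<rho>1 \<rho>2) \<le> 1 - 2 * p * (1 - F))
       \<and> (\<exists>\<rho>1\<in>S_set p F. \<exists>\<rho>2\<in>S_set p F. swap_prob 0 0 \<rho>1 \<rho>2 \<noteq> 0 \<and>
             swap_fid 0 0 \<rho>1 \<rho>2 = complex_of_real (1 - 2 * p * (1 - F)))
       \<and> (p < 1 \<longrightarrow>
            (let Ft = (F - p) / (1 - p);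
                 \<psi> = (\<lambda>x. complex_of_real (sqrt Ft) * bell 0 0 x
                          + complex_of_real (sqrt (1 - Ft)) * bell 1 1 x);
                 \<rho>opt = (\<lambda>x y. complex_of_real p * proj (bell 0 0) x y
                          + complex_of_real (1 - p) * proj \<psi> x y)
             in \<rho>opt \<in> S_set p F \<and> swap_prob 0 0 \<rho>opt \<rho>opt \<noteq> 0 \<and>
                swap_fid 0 0 \<rho>opt \<rho>opt = complex_of_real (1 - 2 * p * (1 - F))))"
  proof -
  have A: "\<forall>\<rho>1\<in>S_set p F. \<forall>\<rho>2\<in>S_set p F. swap_prob 0 0 \<rho>1 \<rho>2 \<noteq> 0 \<longrightarrow>
             swap_fid 0 0 \<rho>1 \<rho>2 \<in> \<real> \<and> Re (swap_fid 0 0 \<rho>1 \<rho>2) \<le> 1 - 2 * p * (1 - F)"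
    using part1[OF assms(3) assms(4) assms(2)] by blast
  have R: "let Ft = (F - p) / (1 - p);
                 \<psi> = (\<lambda>x. complex_of_real (sqrt Ft) * bell 0 0 x
                          + complex_of_real (sqrt (1 - Ft)) * bell 1 1 x);
                 \<rho>opt = (\<lambda>x y. complex_of_real p * proj (bell 0 0) x y
                          + complex_of_real (1 - p) * proj \<psi> x y)
             in \<rho>opt \<in> S_set p F \<and> swap_prob 0 0 \<rho>opt \<rho>opt \<noteq> 0 \<and>
                swap_fid 0 0 \<rho>opt \<rho>opt = complex_of_real (1 - 2 * p * (1 - F))"
    unfolding Let_def using ropt[OF assms(3) assms(4) assms(2)] by blast
  then have B: "\<exists>\<rho>1\<in>S_set p F. \<exists>\<rho>2\<in>S_set p F. swap_prob 0 0 \<rho>1 \<rho>2 \<noteq> 0 \<and>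
             swap_fid 0 0 \<rho>1 \<rho>2 = complex_of_real (1 - 2 * p * (1 - F))"
    unfolding Let_def by blast
  show ?thesis using A B R by blast
qed

end
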